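(* Let $n\ge1$. Suppose that to each ordered orthonormal basis $(v_1,\dots,v_{n+1})$ of $\mathbb{R}^{n+1}$ there is assigned a number $\epsilon=\epsilon(v_1,\dots,v_{n+1})>0$, and let $B_{v_1,\dots,v_{n+1}}=A_{v_1,\dots,v_{n+1},\epsilon(v_1,\dots,v_{n+1})}$. Then there is a finite collection $B_1,\dots,B_N$ of such sets, each of the form $B_{v_1,\dots,v_{n+1}}$, such that $\{x\in\mathbb{R}^{n+1}:|x|\le1\}\subset\bigcup_{i=1}^NB_i$.
   Context: For mutually orthogonal unit vectors $v_1,\dots,v_{n+1}\in\mathbb{R}^{n+1}$ and $\epsilon>0$, $A_{v_1,\dots,v_{n+1},\epsilon}=\{c_1v_1+\dots+c_{n+1}v_{n+1}: |c_1|\le1,\ |c_{i+1}|\le\epsilon|c_i|\text{ for all }1\le i\le n\}$. *)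

theory Defs
  imports "HOL-Analysis.Analysis"
begin

text \<open>An ordered orthonormal basis (v_1,...,v_{n+1}) of the ambient space, represented as a
list of length DIM('a) of mutually orthogonal unit vectors (list index i corresponds to v_{i+1}).\<close>
definition orthonormal_basis_list :: "'a::euclidean_space list \<Rightarrow> bool" where
  "orthonormal_basis_list vs \<longleftrightarrow> length vs = DIM('a) \<and>
     (\<forall>i<length vs. \<forall>j<length vs. vs ! i \<bullet> vs ! j = (if i = j then 1 else 0))"

definition A_set :: "'a::euclidean_space list \<Rightarrow> real \<Rightarrow> 'a set" where
  "A_set vs \<epsilon> = {(\<Sum>i<length vs. c i *\<^sub>R vs ! i) | c.
      \<bar>c 0\<bar> \<le> 1 \<and> (\<forall>i. Suc i < length vs \<longrightarrow> \<bar>c (Suc i)\<bar> \<le> \<epsilon> * \<bar>c i\<bar>)}"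

end

theory Submission
  imports Defs
begin

definition onb :: "'a::euclidean_space set \<Rightarrow> 'a list \<Rightarrow> bool" where
  "onb S vs \<longleftrightarrow> length vs = dim S \<and> set vs \<subseteq> S \<and>
     (\<forall>i<length vs. \<forall>j<length vs. vs ! i \<bullet> vs ! j = (if i = j then 1 else 0))"

lemma dim_perp:
  fixes v :: "'a::euclidean_space"
  assumes "subspace S" "v \<in> S" "v \<noteq> 0"
  shows "dim {y\<in>S. v \<bullet> y = 0} + 1 = dim S"
proof -
  have sp: "span {v} \<subseteq> S" using assms by (intro span_minimal) auto
  have eq: "{y \<in> S. \<forall>x \<in> span {v}. orthogonal x y} = {y\<in>S. v \<bullet> y = 0}"
    by (auto simp: span_singleton orthogonal_def span_base)
  have "dim {y \<in> S. \<forall>x \<in> span {v}. orthogonal x y} + dim (span {v}) = dim S"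
    using dim_subspace_orthogonal_to_vectors[OF subspace_span assms(1) sp] .
  moreover have "dim (span {v}) = 1" using assms(3) by (simp add: dim_span dim_singleton)
  ultimately show ?thesis using eq by simp
qed

lemma onb_cons:
  fixes v :: "'a::euclidean_space"
  assumes "v \<in> S" "v \<bullet> v = 1" "dim {y\<in>S. v \<bullet> y = 0} + 1 = dim S"
    and "onb {y\<in>S. v \<bullet> y = 0} ws"
  shows "onb S (v # ws)"
proof -
  have ws: "length ws = dim {y\<in>S. v \<bullet> y = 0}" "set ws \<subseteq> S" "\<And>w. w \<in> set ws \<Longrightarrow> v \<bullet> w = 0"
    "\<And>i j. i<length ws \<Longrightarrow> j<length ws \<Longrightarrow> ws ! i \<bullet> ws ! j = (if i = j then 1 else 0)"
    using assms(4) unfolding onb_def by auto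
  have o: "(v#ws) ! i \<bullet> (v#ws) ! j = (if i = j then 1 else 0)"
    if "i < Suc (length ws)" "j < Suc (length ws)" for i j
  proof (cases i)
    case 0
    then show ?thesis using that ws(3)[OF nth_mem] assms(2)
      by (cases j) auto
  next
    case (Suc i')
    show ?thesis
    proof (cases j)
      case 0
      have "ws ! i' \<bullet> v = 0" using ws(3)[OF nth_mem, of i'] that Suc by (simp add: inner_commute)
      then show ?thesis using Suc 0 by simp
    next
      case (Suc j')
      then show ?thesis using \<open>i = Suc i'\<close> that ws(4)[of i' j'] by simp
    qed
  qed
  show ?thesis unfolding onb_def using ws(1,2) assms(1,3) o by auto
qed

lemma zero_in_A: "0 \<in> A_set vs e" if "e \<ge> 0"
  unfolding A_set_def using that by (auto intro!: exI[of _ "\<lambda>_. 0"])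

lemma cone_cover:
  fixes v :: "'a::euclidean_space"
  assumes S: "subspace S" and vS: "v \<in> S" and vv: "v \<bullet> v = 1"
    and Fne: "Fv \<noteq> {}"
    and cov: "cball 0 1 \<inter> {y\<in>S. v \<bullet> y = 0} \<subseteq> (\<Union>ws\<in>Fv. A_set ws (eps (v#ws)))"
    and dpos: "\<delta> > 0" and dle: "\<forall>ws\<in>Fv. \<delta> \<le> eps (v#ws)"
    and xS: "x \<in> S" and xv: "\<bar>x \<bullet> v\<bar> \<le> 1"
    and cone: "norm (x - (x \<bullet> v) *\<^sub>R v) \<le> \<delta> * \<bar>x \<bullet> v\<bar>"
  shows "\<exists>ws\<in>Fv. x \<in> A_set (v#ws) (eps (v#ws))"
proof (cases "x \<bullet> v = 0")
  case True
  then have "x = 0" using cone by simp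
  moreover obtain ws where "ws \<in> Fv" using Fne by auto
  moreover have "eps (v#ws) \<ge> 0" using dle dpos \<open>ws \<in> Fv\<close> by force
  ultimately show ?thesis using zero_in_A by blast
next
  case False
  define c where "c = x \<bullet> v"
  define y where "y = x - c *\<^sub>R v"
  define z where "z = (1 / (\<delta> * \<bar>c\<bar>)) *\<^sub>R y"
  have cpos: "\<delta> * \<bar>c\<bar> > 0" using False dpos c_def by simp
  have yS: "y \<in> S" unfolding y_def using S xS vS by (simp add: subspace_diff subspace_scale)
  have yv: "v \<bullet> y = 0" unfolding y_def c_def using vv by (simp add: inner_diff_right inner_commute)
  have zS: "z \<in> {y\<in>S. v \<bullet> y = 0}" unfolding z_def using yS yv S by (simp add: subspace_scale)
  have "norm z = norm y / (\<delta> * \<bar>c\<bar>)" unfolding z_def using cpos by simp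
  then have "norm z \<le> 1" using cone cpos by (simp add: y_def c_def)
  with zS cov obtain ws where ws: "ws \<in> Fv" "z \<in> A_set ws (eps (v#ws))" by force
  then obtain d where zd: "z = (\<Sum>i<length ws. d i *\<^sub>R ws ! i)" "\<bar>d 0\<bar> \<le> 1"
    "\<And>i. Suc i < length ws \<Longrightarrow> \<bar>d (Suc i)\<bar> \<le> eps (v#ws) * \<bar>d i\<bar>"
    unfolding A_set_def by blast
  define e where "e = eps (v#ws)"
  have de: "\<delta> \<le> e" using dle ws e_def by auto
  define c' where "c' = (\<lambda>i. if i = 0 then c else \<delta> * \<bar>c\<bar> * d (i - 1))"
  have "y = (\<delta> * \<bar>c\<bar>) *\<^sub>R z" unfolding z_def using cpos dpos False c_def by simp
  also have "\<dots> = (\<Sum>i<length ws. c' (Suc i) *\<^sub>R ws ! i)"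
    unfolding zd(1) c'_def by (simp add: scaleR_sum_right)
  finally have yeq: "y = (\<Sum>i<length ws. c' (Suc i) *\<^sub>R ws ! i)" .
  have "(\<Sum>i<length (v#ws). c' i *\<^sub>R (v#ws) ! i) = c' 0 *\<^sub>R v + (\<Sum>i<length ws. c' (Suc i) *\<^sub>R ws ! i)"
    by (simp only: length_Cons sum.lessThan_Suc_shift nth_Cons_0 nth_Cons_Suc)
  also have "\<dots> = c *\<^sub>R v + y" unfolding yeq c'_def by simp
  also have "\<dots> = x" by (simp add: y_def)
  finally have xeq: "x = (\<Sum>i<length (v#ws). c' i *\<^sub>R (v#ws) ! i)" by simp
  have c1: "\<bar>c' 0\<bar> \<le> 1" using xv c_def c'_def by simp
  have c2: "\<bar>c' (Suc i)\<bar> \<le> e * \<bar>c' i\<bar>" if "Suc i < length (v#ws)" for i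
  proof (cases i)
    case 0
    have "\<bar>c' (Suc i)\<bar> = \<delta> * \<bar>c\<bar> * \<bar>d 0\<bar>" using 0 c'_def dpos by (simp add: abs_mult)
    also have "\<dots> \<le> \<delta> * \<bar>c\<bar> * 1" using zd(2) cpos by (intro mult_left_mono) auto
    also have "\<dots> \<le> e * \<bar>c\<bar>" using de by (simp add: mult_right_mono)
    finally show ?thesis using 0 c'_def by simp
  next
    case (Suc j)
    have "\<bar>c' (Suc i)\<bar> = \<delta> * \<bar>c\<bar> * \<bar>d (Suc j)\<bar>" using Suc c'_def dpos by (simp add: abs_mult)
    also have "\<dots> \<le> \<delta> * \<bar>c\<bar> * (e * \<bar>d j\<bar>)" using zd(3)[of j] that Suc cpos e_def
      by (intro mult_left_mono) auto
    also have "\<dots> = e * \<bar>c' i\<bar>" using Suc c'_def dpos by (simp add: abs_mult)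
    finally show ?thesis .
  qed
  have "x \<in> A_set (v#ws) e" unfolding A_set_def using xeq c1 c2 by blast
  then show ?thesis using ws e_def by blast
qed

lemma cover_gen:
  fixes S :: "'a::euclidean_space set"
  assumes "subspace S" "dim S = k" "\<forall>vs. onb S vs \<longrightarrow> eps vs > 0"
  shows "\<exists>F. finite F \<and> F \<subseteq> {vs. onb S vs} \<and>
           cball 0 1 \<inter> S \<subseteq> (\<Union>vs\<in>F. A_set vs (eps vs))"
  using assms
proof (induction k arbitrary: S eps)
  case 0
  then have S0: "S \<subseteq> {0}" using dim_eq_0 by blast
  have "onb S []" unfolding onb_def using 0 by simp
  moreover have "0 \<in> A_set [] (eps [])" unfolding A_set_def by (auto intro!: exI[of _ "\<lambda>_. 0"])
  ultimately show ?case using S0 by (intro exI[of _ "{[]}"]) auto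
next
  case (Suc k)
  note S = Suc.prems(1)
  define P where "P v = {y\<in>S. v \<bullet> y = 0}" for v
  define K where "K = S \<inter> sphere 0 1"
  have Ksub: "v \<in> S" "v \<bullet> v = 1" "v \<noteq> 0" if "v \<in> K" for v
    using that unfolding K_def by (auto simp: dot_square_norm)
  have dimP: "dim (P v) + 1 = dim S" if "v \<in> K" for v
    unfolding P_def using dim_perp[OF S] Ksub[OF that] by blast
  have subP: "subspace (P v)" for v
    unfolding P_def using S by (auto simp: subspace_def inner_add_right inner_scaleR_right)
  have "\<exists>G. finite G \<and> G \<subseteq> {ws. onb (P v) ws} \<and>
           cball 0 1 \<inter> P v \<subseteq> (\<Union>ws\<in>G. A_set ws (eps (v#ws)))" if "v \<in> K" for v
  proof (rule Suc.IH[OF subP])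
    show "dim (P v) = k" using dimP[OF that] Suc.prems(2) by simp
    show "\<forall>ws. onb (P v) ws \<longrightarrow> 0 < eps (v # ws)"
      using onb_cons[of v S] Ksub[OF that] dimP[OF that] Suc.prems(3) unfolding P_def by blast
  qed
  then obtain G where G: "\<And>v. v \<in> K \<Longrightarrow> finite (G v) \<and> G v \<subseteq> {ws. onb (P v) ws} \<and>
           cball 0 1 \<inter> P v \<subseteq> (\<Union>ws\<in>G v. A_set ws (eps (v#ws)))"
    by metis
  have Gne: "G v \<noteq> {}" if "v \<in> K" for v
  proof -
    have "0 \<in> cball 0 1 \<inter> P v" unfolding P_def using S by (simp add: subspace_0)
    then show ?thesis using G[OF that] by force
  qed
  define \<delta> where "\<delta> v = Min ((\<lambda>ws. eps (v#ws)) ` G v)" for v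
  have onbG: "onb S (v#ws)" if "v \<in> K" "ws \<in> G v" for v ws
    using onb_cons[of v S ws] Ksub[OF that(1)] dimP[OF that(1)] G[OF that(1)] that(2)
    unfolding P_def by blast
  have dpos: "\<delta> v > 0" if "v \<in> K" for v
    unfolding \<delta>_def using G[OF that] Gne[OF that] onbG[OF that] Suc.prems(3)
    by (subst Min_gr_iff) auto
  have dle: "\<forall>ws\<in>G v. \<delta> v \<le> eps (v#ws)" if "v \<in> K" for v
    unfolding \<delta>_def using G[OF that] by auto
  define U where "U v = {x. norm (x - (x \<bullet> v) *\<^sub>R v) < \<delta> v * \<bar>x \<bullet> v\<bar>}" for v
  have openU: "open (U v)" for v
    unfolding U_def by (intro open_Collect_less continuous_intros)
  have KU: "K \<subseteq> \<Union>(U ` K)"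
  proof
    fix v assume v: "v \<in> K"
    then have "v \<in> U v" unfolding U_def using Ksub[OF v] dpos[OF v] by simp
    then show "v \<in> \<Union>(U ` K)" using v by blast
  qed
  have cK: "compact K" unfolding K_def
    by (metis Int_commute compact_Int_closed compact_sphere closed_subspace S)
  obtain T where T: "T \<subseteq> K" "finite T" "K \<subseteq> \<Union>(U ` T)"
    using compactE_image[OF cK openU KU] by metis
  obtain x0 where x0: "x0 \<in> S" "x0 \<noteq> 0"
    using Suc.prems(2) dim_eq_0[of S] by auto
  have "x0 /\<^sub>R norm x0 \<in> K" unfolding K_def using x0 S by (simp add: subspace_scale)
  then obtain v0 where v0: "v0 \<in> T" using T(3) by auto
  define F where "F = (\<Union>v\<in>T. (\<lambda>ws. v#ws) ` G v)"
  have "finite F" unfolding F_def using T G by auto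
  moreover have "F \<subseteq> {vs. onb S vs}" unfolding F_def using T onbG by auto
  moreover have "cball 0 1 \<inter> S \<subseteq> (\<Union>vs\<in>F. A_set vs (eps vs))"
  proof
    fix x assume x: "x \<in> cball 0 1 \<inter> S"
    have "\<exists>v\<in>T. \<bar>x \<bullet> v\<bar> \<le> 1 \<and> norm (x - (x \<bullet> v) *\<^sub>R v) \<le> \<delta> v * \<bar>x \<bullet> v\<bar>"
    proof (cases "x = 0")
      case True
      then show ?thesis using v0 by auto
    next
      case False
      define u where "u = x /\<^sub>R norm x"
      have "u \<in> K" unfolding K_def u_def using x S False by (simp add: subspace_scale)
      then obtain v where v: "v \<in> T" "u \<in> U v" using T(3) by auto
      have vK: "v \<in> K" using v T by auto
      have xu: "x = norm x *\<^sub>R u" unfolding u_def using False by simp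
      have "x - (x \<bullet> v) *\<^sub>R v = norm x *\<^sub>R (u - (u \<bullet> v) *\<^sub>R v)"
        by (subst (1 2) xu) (simp add: algebra_simps)
      then have "norm (x - (x \<bullet> v) *\<^sub>R v) = norm x * norm (u - (u \<bullet> v) *\<^sub>R v)"
        by simp
      also have "\<dots> \<le> norm x * (\<delta> v * \<bar>u \<bullet> v\<bar>)"
        using v(2) unfolding U_def by (intro mult_left_mono) auto
      also have "\<dots> = \<delta> v * \<bar>x \<bullet> v\<bar>" by (subst (2) xu) (simp add: abs_mult)
      finally have "norm (x - (x \<bullet> v) *\<^sub>R v) \<le> \<delta> v * \<bar>x \<bullet> v\<bar>" .
      moreover have "\<bar>x \<bullet> v\<bar> \<le> 1"
        using Cauchy_Schwarz_ineq2[of x v] x Ksub[OF vK] vK unfolding K_def by auto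
      ultimately show ?thesis using v by blast
    qed
    then obtain v where v: "v \<in> T" "\<bar>x \<bullet> v\<bar> \<le> 1" "norm (x - (x \<bullet> v) *\<^sub>R v) \<le> \<delta> v * \<bar>x \<bullet> v\<bar>"
      by blast
    have vK: "v \<in> K" using v T by auto
    obtain ws where "ws \<in> G v" "x \<in> A_set (v#ws) (eps (v#ws))"
      using cone_cover[OF S Ksub(1,2)[OF vK] Gne[OF vK] _ dpos[OF vK] dle[OF vK], of x] G[OF vK] x v
      unfolding P_def by auto
    then show "x \<in> (\<Union>vs\<in>F. A_set vs (eps vs))" unfolding F_def using v by blast
  qed
  ultimately show ?case by blast
qed

theorem lemma2p4:
  fixes eps :: "'a::euclidean_space list \<Rightarrow> real"
  assumes "DIM('a) \<ge> 2"
    and "\<And>vs. orthonormal_basis_list vs \<Longrightarrow> eps vs > 0"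
  shows "\<exists>F. finite F \<and> F \<subseteq> {vs. orthonormal_basis_list vs} \<and>
           cball (0::'a) 1 \<subseteq> (\<Union>vs\<in>F. A_set vs (eps vs))"
proof -
  have eq: "onb (UNIV::'a set) vs \<longleftrightarrow> orthonormal_basis_list vs" for vs
    unfolding onb_def orthonormal_basis_list_def by (simp add: dim_UNIV)
  show ?thesis using cover_gen[of "UNIV::'a set" "DIM('a)" eps] assms(2) unfolding eq by auto
qed

end
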